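(* Let $T$ be a rooted tree with $n$ vertices and root $r$, and let $X_n$ be the number of descents $\mathrm{des}(T,w)$ of a labeling $w$ of $T$ chosen uniformly at random among all $n!$ labelings. Then \[\mathbb{E}(X_n)=\frac{n-1}{2}\qquad\text{and}\qquad \mathrm{Var}(X_n)=\frac{2d_r+\sum_{v\in V(T)} d_v^2}{12},\] where $d_v$ denotes the down-degree of the vertex $v$.
   Context: A labeling of a rooted tree $T$ with $n$ vertices is a bijection $w: V(T)\to\{1,\dots,n\}$. A vertex $v$ with parent $u$ is a descent of $(T,w)$ if $w(v)>w(u)$ (the root is never a descent); $\mathrm{des}(T,w)$ is the number of descents. The down-degree of a vertex is its number of children. *)

theory Defs
  imports "HOL-Probability.Probability" "HOL-Library.FuncSet"
begin

text \<open>A rooted tree on the finite vertex set V with root r, given by a parent map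
  par (only meaningful on V - {r}): every non-root vertex has its parent in V, and
  iterating the parent map from any vertex eventually reaches the root.\<close>
definition rooted_tree :: "'a set \<Rightarrow> ('a \<Rightarrow> 'a) \<Rightarrow> 'a \<Rightarrow> bool" where
  "rooted_tree V par r \<longleftrightarrow> finite V \<and> r \<in> V \<and> (\<forall>v\<in>V - {r}. par v \<in> V)
     \<and> (\<forall>v\<in>V. \<exists>k. (par ^^ k) v = r)"

definition labelings :: "'a set \<Rightarrow> ('a \<Rightarrow> nat) set" where
  "labelings V = {w \<in> V \<rightarrow>\<^sub>E {1..card V}. bij_betw w V {1..card V}}"

definition des :: "'a set \<Rightarrow> ('a \<Rightarrow> 'a) \<Rightarrow> 'a \<Rightarrow> ('a \<Rightarrow> nat) \<Rightarrow> nat" where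
  "des V par r w = card {v \<in> V - {r}. w v > w (par v)}"

definition down_degree :: "'a set \<Rightarrow> ('a \<Rightarrow> 'a) \<Rightarrow> 'a \<Rightarrow> 'a \<Rightarrow> nat" where
  "down_degree V par r v = card {u \<in> V - {r}. par u = v}"

end

theory Submission
  imports Defs
begin

definition sw :: "'a \<Rightarrow> 'a \<Rightarrow> 'a \<Rightarrow> 'a" where
  "sw a b = (\<lambda>x. if x = a then b else if x = b then a else x)"

lemma sw_sw: "sw a b (sw a b x) = x"
  by (auto simp: sw_def)

lemma sw_bij: "a \<in> V \<Longrightarrow> b \<in> V \<Longrightarrow> bij_betw (sw a b) V V"
  by (rule bij_betwI[where g="sw a b"]) (auto simp: sw_def)

lemma lab_sw:
  assumes "a \<in> V" "b \<in> V" "w \<in> labelings V"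
  shows "w \<circ> sw a b \<in> labelings V"
proof -
  have "bij_betw (w \<circ> sw a b) V {1..card V}"
    using assms by (auto simp: labelings_def intro: bij_betw_trans sw_bij)
  moreover have "w \<circ> sw a b \<in> V \<rightarrow>\<^sub>E {1..card V}"
    using assms by (auto simp: labelings_def sw_def PiE_def Pi_def extensional_def)
  ultimately show ?thesis by (simp add: labelings_def)
qed

lemma card_sw:
  assumes "a \<in> V" "b \<in> V"
  shows "card {w \<in> labelings V. Q w} = card {w \<in> labelings V. Q (w \<circ> sw a b)}"
proof -
  have inv: "w \<circ> sw a b \<circ> sw a b = w" for w :: "'a \<Rightarrow> nat"
    by (auto simp: sw_sw)
  have "{w \<in> labelings V. Q w} = (\<lambda>w. w \<circ> sw a b) ` {w \<in> labelings V. Q (w \<circ> sw a b)}"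
  proof
    show "{w \<in> labelings V. Q w} \<subseteq> (\<lambda>w. w \<circ> sw a b) ` {w \<in> labelings V. Q (w \<circ> sw a b)}"
    proof
      fix w assume "w \<in> {w \<in> labelings V. Q w}"
      then have "w \<circ> sw a b \<in> {w \<in> labelings V. Q (w \<circ> sw a b)}" "w = (w \<circ> sw a b) \<circ> sw a b"
        using lab_sw[OF assms] inv by auto
      then show "w \<in> (\<lambda>w. w \<circ> sw a b) ` {w \<in> labelings V. Q (w \<circ> sw a b)}" by blast
    qed
  qed (use lab_sw[OF assms] in auto)
  moreover have "inj_on (\<lambda>w. w \<circ> sw a b) X" for X :: "('a \<Rightarrow> nat) set"
  proof (rule inj_onI)
    fix x y :: "'a \<Rightarrow> nat" assume "x \<in> X" "y \<in> X" "x \<circ> sw a b = y \<circ> sw a b"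
    then have "x \<circ> sw a b \<circ> sw a b = y \<circ> sw a b \<circ> sw a b" by simp
    then show "x = y" by (simp only: inv)
  qed
  ultimately show ?thesis by (simp add: card_image)
qed

lemma lab_inj: "w \<in> labelings V \<Longrightarrow> a \<in> V \<Longrightarrow> b \<in> V \<Longrightarrow> a \<noteq> b \<Longrightarrow> w a \<noteq> w b"
  unfolding labelings_def by (auto dest: bij_betw_imp_inj_on inj_onD)

lemma lab_finite: "finite V \<Longrightarrow> finite (labelings V)"
  unfolding labelings_def
  by (rule finite_subset[OF _ finite_PiE[of V "\<lambda>_. {1..card V}"]]) auto

lemma lab_nonempty: "finite V \<Longrightarrow> labelings V \<noteq> {}"
proof -
  assume f: "finite V"
  obtain h where h: "bij_betw h V {1..card V}"
    using finite_same_card_bij[OF f, of "{1..card V}"] by auto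
  have "bij_betw (restrict h V) V {1..card V}"
    using h by (rule bij_betw_cong[THEN iffD1, rotated]) auto
  moreover have "restrict h V \<in> V \<rightarrow>\<^sub>E {1..card V}"
    using h by (auto simp: bij_betw_def)
  ultimately show ?thesis unfolding labelings_def by blast
qed

lemma half:
  assumes "a \<in> V" "b \<in> V" "a \<noteq> b"
    and R: "\<And>w. w \<in> labelings V \<Longrightarrow> R (w \<circ> sw a b) = R w"
    and f: "finite V"
  shows "2 * card {w \<in> labelings V. w a > w b \<and> R w} = card {w \<in> labelings V. R w}"
proof -
  let ?L = "labelings V"
  have "{w \<in> ?L. R w} = {w \<in> ?L. w a > w b \<and> R w} \<union> {w \<in> ?L. w b > w a \<and> R w}"
    using lab_inj[OF _ assms(1-3)] by (auto simp: neq_iff)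
  moreover have "card {w \<in> ?L. w b > w a \<and> R w} = card {w \<in> ?L. w a > w b \<and> R w}"
  proof -
    have "card {w \<in> ?L. w b > w a \<and> R w} = card {w \<in> ?L. (w \<circ> sw a b) b > (w \<circ> sw a b) a \<and> R (w \<circ> sw a b)}"
      by (rule card_sw[OF assms(1,2)])
    also have "{w \<in> ?L. (w \<circ> sw a b) b > (w \<circ> sw a b) a \<and> R (w \<circ> sw a b)} = {w \<in> ?L. w a > w b \<and> R w}"
      using R assms(3) by (auto simp: sw_def)
    finally show ?thesis .
  qed
  moreover have "{w \<in> ?L. w a > w b \<and> R w} \<inter> {w \<in> ?L. w b > w a \<and> R w} = {}" by auto
  ultimately show ?thesis
    using lab_finite[OF f] card_Un_disjoint[of "{w \<in> ?L. w a > w b \<and> R w}" "{w \<in> ?L. w b > w a \<and> R w}"]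
    by simp
qed

lemma pmin:
  assumes V: "a \<in> V" "b \<in> V" "c \<in> V" and d: "a \<noteq> b" "a \<noteq> c" "b \<noteq> c"
    and f: "finite V"
  shows "3 * card {w \<in> labelings V. w a < w b \<and> w a < w c} = card (labelings V)"
proof -
  let ?L = "labelings V"
  let ?A = "{w \<in> ?L. w a < w b \<and> w a < w c}"
  let ?B = "{w \<in> ?L. w b < w a \<and> w b < w c}"
  let ?C = "{w \<in> ?L. w c < w a \<and> w c < w b}"
  have fin: "finite ?A" "finite ?B" "finite ?C" using lab_finite[OF f] by auto
  have "?L = ?A \<union> ?B \<union> ?C"
  proof (rule set_eqI, rule iffI)
    fix w assume w: "w \<in> ?L"
    then have "w a \<noteq> w b" "w a \<noteq> w c" "w b \<noteq> w c" using lab_inj[OF w] V d by auto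
    then show "w \<in> ?A \<union> ?B \<union> ?C" using w by (auto simp: neq_iff)
  qed auto
  moreover have "?A \<inter> ?B = {}" "(?A \<union> ?B) \<inter> ?C = {}" by auto
  ultimately have "card ?L = card ?A + card ?B + card ?C"
    using fin card_Un_disjoint[of ?A ?B] card_Un_disjoint[of "?A \<union> ?B" ?C] by simp
  moreover have "card ?B = card ?A"
  proof -
    have "card ?B = card {w \<in> ?L. (w \<circ> sw a b) b < (w \<circ> sw a b) a \<and> (w \<circ> sw a b) b < (w \<circ> sw a b) c}"
      by (rule card_sw[OF V(1,2)])
    also have "\<dots> = card ?A" using d by (simp add: sw_def)
    finally show ?thesis .
  qed
  moreover have "card ?C = card ?A"
  proof -
    have "card ?C = card {w \<in> ?L. (w \<circ> sw a c) c < (w \<circ> sw a c) a \<and> (w \<circ> sw a c) c < (w \<circ> sw a c) b}"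
      by (rule card_sw[OF V(1,3)])
    also have "\<dots> = card ?A" using d by (simp add: sw_def conj_commute)
    finally show ?thesis .
  qed
  ultimately show ?thesis by simp
qed

lemma p2:
  assumes "a \<in> V" "b \<in> V" "a \<noteq> b" "finite V"
  shows "2 * card {w \<in> labelings V. w a > w b} = card (labelings V)"
  using half[OF assms(1-3), of "\<lambda>_. True"] assms(4) by simp

lemma pchain:
  assumes V: "a \<in> V" "b \<in> V" "c \<in> V" and d: "a \<noteq> b" "a \<noteq> c" "b \<noteq> c"
    and f: "finite V"
  shows "6 * card {w \<in> labelings V. w a > w b \<and> w b > w c} = card (labelings V)"
proof -
  have "2 * card {w \<in> labelings V. w a > w b \<and> (w c < w a \<and> w c < w b)}
        = card {w \<in> labelings V. w c < w a \<and> w c < w b}"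
    by (rule half[OF V(1,2) d(1) _ f]) (use d in \<open>auto simp: sw_def\<close>)
  moreover have "{w \<in> labelings V. w a > w b \<and> (w c < w a \<and> w c < w b)}
     = {w \<in> labelings V. w a > w b \<and> w b > w c}" by auto
  moreover have "3 * card {w \<in> labelings V. w c < w a \<and> w c < w b} = card (labelings V)"
    by (rule pmin[OF V(3,1,2) _ _ d(1) f]) (use d in auto)
  ultimately have "2 * card {w \<in> labelings V. w a > w b \<and> w b > w c} = card {w \<in> labelings V. w c < w a \<and> w c < w b}"
    by simp
  then show ?thesis using \<open>3 * _ = _\<close> by linarith
qed

lemma pdisj:
  assumes V: "a \<in> V" "b \<in> V" "c \<in> V" "e \<in> V"
    and d: "a \<noteq> b" "c \<noteq> e" "a \<noteq> c" "a \<noteq> e" "b \<noteq> c" "b \<noteq> e"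
    and f: "finite V"
  shows "4 * card {w \<in> labelings V. w a > w b \<and> w c > w e} = card (labelings V)"
proof -
  have "2 * card {w \<in> labelings V. w a > w b \<and> w c > w e}
        = card {w \<in> labelings V. w c > w e}"
    by (rule half[OF V(1,2) d(1) _ f]) (use d in \<open>auto simp: sw_def\<close>)
  moreover have "2 * card {w \<in> labelings V. w c > w e} = card (labelings V)"
    by (rule p2[OF V(3,4) d(2) f])
  ultimately show ?thesis by linarith
qed

lemma tree_par: "rooted_tree V par r \<Longrightarrow> u \<in> V - {r} \<Longrightarrow> par u \<in> V"
  unfolding rooted_tree_def by auto

lemma tree_neq1:
  assumes T: "rooted_tree V par r" and u: "u \<in> V - {r}"
  shows "par u \<noteq> u"
proof
  assume h: "par u = u"
  have "(par ^^ k) u = u" for k by (induction k) (auto simp: h)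
  moreover obtain k where "(par ^^ k) u = r" using T u unfolding rooted_tree_def by auto
  ultimately show False using u by auto
qed

lemma tree_neq2:
  assumes T: "rooted_tree V par r" and u: "u \<in> V - {r}" and pu: "par u \<in> V - {r}"
  shows "par (par u) \<noteq> u"
proof
  assume h: "par (par u) = u"
  have hk: "(par ^^ k) u \<in> {u, par u}" for k by (induction k) (auto simp: h)
  obtain k where "(par ^^ k) u = r" using T u unfolding rooted_tree_def by auto
  then show False using hk[of k] u pu by auto
qed

lemma nat_real_eq: "k * c = (n::nat) \<Longrightarrow> real k * real c = real n"
  by (metis of_nat_mult)

lemma pair:
  assumes T: "rooted_tree V par r" and u: "u \<in> V - {r}" and v: "v \<in> V - {r}"
  shows "12 * real (card {w \<in> labelings V. w (par u) < w u \<and> w (par v) < w v})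
    = real (card (labelings V)) * (3 + 3 * of_bool (u = v) + of_bool (u \<noteq> v \<and> par u = par v)
         - of_bool (par u = v) - of_bool (par v = u))"
proof -
  have f: "finite V" using T unfolding rooted_tree_def by auto
  have pu: "par u \<in> V" and pv: "par v \<in> V" using tree_par[OF T] u v by auto
  have nu: "par u \<noteq> u" and nv: "par v \<noteq> v" using tree_neq1[OF T] u v by auto
  show ?thesis
  proof (cases "u = v")
    case True
    have "2 * card {w \<in> labelings V. w u > w (par u)} = card (labelings V)"
      using p2[OF _ pu nu[symmetric] f] u by auto
    note nat_real_eq[OF this]
    then have "2 * real (card {w \<in> labelings V. w u > w (par u)}) = real (card (labelings V))"
      by simp
    then show ?thesis using True nu by simp
  next
    case uv: False
    show ?thesis
    proof (cases "par u = par v")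
      case True
      have "3 * card {w \<in> labelings V. w (par u) < w u \<and> w (par u) < w v} = card (labelings V)"
        by (rule pmin[OF pu _ _ _ _ uv f]) (use u v nu nv True in auto)
      note nat_real_eq[OF this]
    then have "3 * real (card {w \<in> labelings V. w (par u) < w u \<and> w (par u) < w v}) = real (card (labelings V))"
        by simp
      then show ?thesis using True uv nu nv by simp
    next
      case ne: False
      show ?thesis
      proof (cases "par u = v")
        case True
        have "par v \<noteq> u" using tree_neq2[OF T u] True v by auto
        have "6 * card {w \<in> labelings V. w u > w v \<and> w v > w (par v)} = card (labelings V)"
          proof (rule pchain[OF _ _ pv uv _ _ f])
          show "u \<in> V" "v \<in> V" using u v by auto
          show "u \<noteq> par v" using \<open>par v \<noteq> u\<close> by auto
          show "v \<noteq> par v" using nv by auto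
        qed
        moreover have "{w \<in> labelings V. w u > w v \<and> w v > w (par v)}
           = {w \<in> labelings V. w (par u) < w u \<and> w (par v) < w v}" using True by auto
        ultimately have "6 * real (card {w \<in> labelings V. w (par u) < w u \<and> w (par v) < w v}) = real (card (labelings V))"
          by simp
        then show ?thesis using True uv nv \<open>par v \<noteq> u\<close> by simp
      next
        case nuv: False
        show ?thesis
        proof (cases "par v = u")
          case True
          have "6 * card {w \<in> labelings V. w v > w u \<and> w u > w (par u)} = card (labelings V)"
          proof (rule pchain[OF _ _ pu _ _ _ f])
            show "v \<in> V" "u \<in> V" using u v by auto
            show "v \<noteq> u" using uv by auto
            show "v \<noteq> par u" using nuv by auto
            show "u \<noteq> par u" using nu by auto
          qed
          moreover have "{w \<in> labelings V. w v > w u \<and> w u > w (par u)}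
             = {w \<in> labelings V. w (par u) < w u \<and> w (par v) < w v}" using True by auto
          ultimately have "6 * real (card {w \<in> labelings V. w (par u) < w u \<and> w (par v) < w v}) = real (card (labelings V))"
            by simp
          then show ?thesis using True uv nuv nu by simp
        next
          case nvu: False
          have "4 * card {w \<in> labelings V. w u > w (par u) \<and> w v > w (par v)} = card (labelings V)"
            by (rule pdisj) (use u v pu pv nu nv uv ne nuv nvu f in auto)
          note nat_real_eq[OF this]
    then have "4 * real (card {w \<in> labelings V. w (par u) < w u \<and> w (par v) < w v}) = real (card (labelings V))"
            by simp
          then show ?thesis using uv nuv nvu ne by simp
        qed
      qed
    qed
  qed
qed

lemma card_sum_bool:
  assumes f: "finite A" shows "real (card {x \<in> A. Q x}) = (\<Sum>x\<in>A. of_bool (Q x))"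
proof -
  have e: "{x \<in> A. Q x} = A \<inter> {x. Q x}" by blast
  have "(\<Sum>x\<in>A. of_bool (Q x) :: real) = real (card (A \<inter> {x. Q x}))" using f by simp
  then show ?thesis by (simp only: e)
qed

declare sum_of_bool_eq[simp del]

theorem lemma3p3:
  fixes V :: "'a set" and par :: "'a \<Rightarrow> 'a" and r :: 'a
  assumes "rooted_tree V par r"
  defines "X \<equiv> (\<lambda>w. real (des V par r w))"
    and "P \<equiv> pmf_of_set (labelings V)"
  shows "measure_pmf.expectation P X = (real (card V) - 1) / 2 \<and>
         measure_pmf.variance P X =
           (2 * real (down_degree V par r r) + (\<Sum>v\<in>V. real (down_degree V par r v) ^ 2)) / 12"
proof -
  note T = assms(1)
  have fV: "finite V" and rV: "r \<in> V" using T unfolding rooted_tree_def by blast+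
  define E where "E = V - {r}"
  define L where "L = labelings V"
  have fE: "finite E" using fV by (simp add: E_def)
  have fL: "finite L" using lab_finite[OF fV] by (simp add: L_def)
  have neL: "L \<noteq> {}" using lab_nonempty[OF fV] by (simp add: L_def)
  have "card V \<noteq> 0" using fV rV by auto
  then have c1: "card V \<ge> 1" by linarith
  have cE: "real (card E) = real (card V) - 1"
    using fV rV c1 by (simp add: E_def card_Diff_singleton of_nat_diff)
  define N where "N = real (card L)"
  have Npos: "N > 0" using fL neL by (simp add: N_def card_gt_0_iff)
  define I where "I = (\<lambda>(w::'a \<Rightarrow> nat) v. of_bool (w (par v) < w v) :: real)"
  have Xs: "X w = (\<Sum>v\<in>E. I w v)" for w
    unfolding X_def des_def I_def E_def using card_sum_bool[of "V - {r}"] fV by simp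
  have pE: "par u \<in> V" if "u \<in> E" for u using tree_par[OF T] that by (simp add: E_def)
  have S1: "(\<Sum>w\<in>L. X w) = real (card E) * N / 2"
  proof -
    have "(\<Sum>w\<in>L. X w) = (\<Sum>v\<in>E. \<Sum>w\<in>L. I w v)" by (simp add: Xs sum.swap[of _ L E])
    also have "\<dots> = (\<Sum>v\<in>E. N / 2)"
    proof (rule sum.cong[OF refl])
      fix v assume v: "v \<in> E"
      have "(\<Sum>w\<in>L. I w v) = real (card {w \<in> L. w (par v) < w v})"
        using card_sum_bool[OF fL] by (simp add: I_def)
      moreover have "2 * card {w \<in> L. w v > w (par v)} = card L"
        unfolding L_def by (rule p2) (use v pE[OF v] tree_neq1[OF T, of v] fV in \<open>auto simp: E_def\<close>)
      ultimately show "(\<Sum>w\<in>L. I w v) = N / 2" unfolding N_def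
        using nat_real_eq by fastforce
    qed
    finally show ?thesis by simp
  qed
  define C where "C = (\<lambda>u v. real (card {w \<in> L. w (par u) < w u \<and> w (par v) < w v}))"
  have S2: "(\<Sum>w\<in>L. X w ^ 2) = (\<Sum>u\<in>E. \<Sum>v\<in>E. C u v)"
  proof -
    have "(\<Sum>w\<in>L. X w ^ 2) = (\<Sum>w\<in>L. \<Sum>u\<in>E. \<Sum>v\<in>E. I w u * I w v)"
      by (simp add: Xs power2_eq_square sum_product)
    also have "\<dots> = (\<Sum>u\<in>E. \<Sum>w\<in>L. \<Sum>v\<in>E. I w u * I w v)" by (rule sum.swap)
    also have "\<dots> = (\<Sum>u\<in>E. \<Sum>v\<in>E. \<Sum>w\<in>L. I w u * I w v)" by (simp add: sum.swap[of _ L E])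
    also have "\<dots> = (\<Sum>u\<in>E. \<Sum>v\<in>E. C u v)"
      unfolding C_def I_def using card_sum_bool[OF fL] by (simp add: of_bool_conj)
    finally show ?thesis .
  qed
  define B where "B = (\<lambda>u v. 3 + 3 * of_bool (u = v) + of_bool (u \<noteq> v \<and> par u = par v)
         - of_bool (par u = v) - of_bool (par v = u) :: real)"
  have S3: "(\<Sum>u\<in>E. \<Sum>v\<in>E. C u v) = N / 12 * (\<Sum>u\<in>E. \<Sum>v\<in>E. B u v)"
  proof -
    have h: "C u v = N / 12 * B u v" if "u \<in> E" "v \<in> E" for u v
      using pair[OF T, of u v] that unfolding C_def B_def N_def L_def E_def by simp
    have "(\<Sum>u\<in>E. \<Sum>v\<in>E. C u v) = (\<Sum>u\<in>E. \<Sum>v\<in>E. N / 12 * B u v)"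
      by (intro sum.cong refl h)
    then show ?thesis by (simp only: sum_distrib_left)
  qed
  define D2 where "D2 = (\<Sum>v\<in>V. real (down_degree V par r v) ^ 2)"
  define dr where "dr = real (down_degree V par r r)"
  have dd: "real (down_degree V par r p) = (\<Sum>u\<in>E. of_bool (par u = p))" for p
    unfolding down_degree_def E_def using card_sum_bool[of "V - {r}"] fV by simp
  have sumB: "(\<Sum>u\<in>E. \<Sum>v\<in>E. B u v) = 3 * real (card E) ^ 2 + D2 + 2 * dr"
  proof -
    have Bs: "B u v = 3 + 2 * of_bool (u = v) + of_bool (par u = par v) - of_bool (par u = v) - of_bool (par v = u)" for u v
      by (cases "u = v") (simp_all add: B_def)
    have A2: "(\<Sum>u\<in>E. \<Sum>v\<in>E. of_bool (u = v) :: real) = real (card E)"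
    proof -
      have "(\<Sum>v\<in>E. of_bool (u = v) :: real) = 1" if "u \<in> E" for u
      proof -
        have "{v \<in> E. u = v} = {u}" using that by auto
        then show ?thesis using card_sum_bool[OF fE, of "\<lambda>v. u = v"] by simp
      qed
      then show ?thesis by simp
    qed
    have Q2: "(\<Sum>u\<in>E. \<Sum>v\<in>E. of_bool (par u = v) :: real) = real (card E) - dr"
    proof -
      have "(\<Sum>v\<in>E. of_bool (par u = v) :: real) = 1 - of_bool (par u = r)" if "u \<in> E" for u
      proof (cases "par u = r")
        case True
        then have e: "{v \<in> E. par u = v} = {}" by (auto simp: E_def)
        have "(\<Sum>v\<in>E. of_bool (par u = v) :: real) = real (card {v \<in> E. par u = v})"
          by (rule card_sum_bool[OF fE, symmetric])
        also have "\<dots> = 0" by (simp only: e card.empty of_nat_0)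
        finally show ?thesis using True by simp
      next
        case False
        then have "{v \<in> E. par u = v} = {par u}" using pE[OF that] by (auto simp: E_def)
        then show ?thesis using False card_sum_bool[OF fE, of "\<lambda>v. par u = v"] by simp
      qed
      then have "(\<Sum>u\<in>E. \<Sum>v\<in>E. of_bool (par u = v) :: real) = (\<Sum>u\<in>E. 1 - of_bool (par u = r))"
        by simp
      also have "\<dots> = real (card E) - dr" unfolding dr_def dd by (simp add: sum_subtractf)
      finally show ?thesis .
    qed
    have Q3: "(\<Sum>u\<in>E. \<Sum>v\<in>E. of_bool (par v = u) :: real) = real (card E) - dr"
      using Q2 sum.swap[of "\<lambda>u v. of_bool (par v = u) :: real" E E] by simp
    have Q1: "(\<Sum>u\<in>E. \<Sum>v\<in>E. of_bool (par u = par v) :: real) = D2"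
    proof -
      have "D2 = (\<Sum>p\<in>V. \<Sum>u\<in>E. \<Sum>v\<in>E. of_bool (par u = p) * of_bool (par v = p))"
        unfolding D2_def dd by (simp add: power2_eq_square sum_product)
      also have "\<dots> = (\<Sum>u\<in>E. \<Sum>p\<in>V. \<Sum>v\<in>E. of_bool (par u = p) * of_bool (par v = p))"
        by (rule sum.swap)
      also have "\<dots> = (\<Sum>u\<in>E. \<Sum>v\<in>E. \<Sum>p\<in>V. of_bool (par u = p \<and> par v = p))"
        by (simp add: sum.swap[of _ V E] of_bool_conj)
      also have "\<dots> = (\<Sum>u\<in>E. \<Sum>v\<in>E. of_bool (par u = par v))"
      proof (intro sum.cong[OF refl])
        fix u v assume u: "u \<in> E" and v: "v \<in> E"
        show "(\<Sum>p\<in>V. of_bool (par u = p \<and> par v = p) :: real) = of_bool (par u = par v)"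
        proof (cases "par u = par v")
          case True
          then have "{p \<in> V. par u = p \<and> par v = p} = {par u}" using pE[OF u] by auto
          then show ?thesis using True card_sum_bool[OF fV, of "\<lambda>p. par u = p \<and> par v = p"] by simp
        next
          case False
          then have e: "{p \<in> V. par u = p \<and> par v = p} = {}" by auto
          have "(\<Sum>p\<in>V. of_bool (par u = p \<and> par v = p) :: real) = real (card {p \<in> V. par u = p \<and> par v = p})"
            by (rule card_sum_bool[OF fV, symmetric])
          also have "\<dots> = 0" by (simp only: e card.empty of_nat_0)
          finally show ?thesis using False by simp
        qed
      qed
      finally show ?thesis by simp
    qed
    have "(\<Sum>u\<in>E. \<Sum>v\<in>E. B u v) = (\<Sum>u\<in>E. \<Sum>v\<in>E. 3 + 2 * of_bool (u = v) + of_bool (par u = par v) - of_bool (par u = v) - of_bool (par v = u) :: real)"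
      by (simp add: Bs)
    also have "\<dots> = 3 * real (card E) * real (card E) + 2 * (\<Sum>u\<in>E. \<Sum>v\<in>E. of_bool (u = v) :: real)
        + (\<Sum>u\<in>E. \<Sum>v\<in>E. of_bool (par u = par v) :: real) - (\<Sum>u\<in>E. \<Sum>v\<in>E. of_bool (par u = v) :: real)
        - (\<Sum>u\<in>E. \<Sum>v\<in>E. of_bool (par v = u) :: real)"
      by (simp add: sum.distrib sum_subtractf sum_distrib_left)
    finally show ?thesis using A2 Q1 Q2 Q3 by (simp add: power2_eq_square)
  qed
  have mu: "measure_pmf.expectation P X = real (card E) / 2"
    unfolding P_def L_def[symmetric] using integral_pmf_of_set[OF neL fL, of X] S1 Npos
    by (simp add: N_def)
  define m where "m = real (card E) / 2"
  have "measure_pmf.variance P X = (\<Sum>w\<in>L. (X w - m) ^ 2) / N"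
    unfolding mu m_def[symmetric] unfolding P_def L_def[symmetric] using integral_pmf_of_set[OF neL fL]
    by (simp add: N_def)
  also have "(\<Sum>w\<in>L. (X w - m) ^ 2) = (\<Sum>w\<in>L. X w ^ 2 - 2 * m * X w + m ^ 2)"
    by (rule sum.cong[OF refl]) (simp add: power2_diff)
  also have "\<dots> = (\<Sum>w\<in>L. X w ^ 2) - 2 * m * (\<Sum>w\<in>L. X w) + N * m ^ 2"
    by (simp add: sum.distrib sum_subtractf sum_distrib_left N_def)
  finally have V1: "measure_pmf.variance P X = ((\<Sum>w\<in>L. X w ^ 2) - 2 * m * (\<Sum>w\<in>L. X w) + N * m ^ 2) / N" .
  have S4: "(\<Sum>w\<in>L. X w ^ 2) = N / 12 * (3 * real (card E) ^ 2 + D2 + 2 * dr)"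
    using S2 S3 sumB by simp
  have alg: "\<And>c n. n > 0 \<Longrightarrow> (n / 12 * (3 * c ^ 2 + D2 + 2 * dr) - 2 * (c / 2) * (c * n / 2) + n * (c / 2) ^ 2) / n
     = (2 * dr + D2) / (12::real)"
    by (simp add: field_simps power2_eq_square)
  have "measure_pmf.variance P X = (2 * dr + D2) / 12"
    unfolding V1 S4 S1 m_def by (rule alg[OF Npos])
  then have var: "measure_pmf.variance P X =
           (2 * real (down_degree V par r r) + (\<Sum>v\<in>V. real (down_degree V par r v) ^ 2)) / 12"
    by (simp only: D2_def dr_def)
  show ?thesis
  proof
    show "measure_pmf.expectation P X = (real (card V) - 1) / 2" using mu cE by simp
  qed (rule var)
qed

end
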